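(* The sequence of expected probabilities $\mathrm{Prob}(\mathcal{V}\mid\mathcal{E})$ that Peggy deceives Victor by guessing and sending her response before receiving the challenge is indistinguishable from the sequence $$q_\ell=\sum_{h\in\mathbb{Z}_2^{\ell}}\sum_{x\in\mathbb{Z}_2^\ell}2^{-\ell}\,G(h\vdash x\boxplus h)_\ell=\left(\tfrac34\right)^\ell.$$ In particular $\mathrm{Prob}(\mathcal{V}\mid\mathcal{E})$ is negligible.
   Context: Hancke–Kuhn protocol with security parameter $\ell$: shared secret $s$, hash $H$ modeled as a random oracle, counters $a,b$ never reused, token $h=H(s::a::b)=h^{(0)}::h^{(1)}$, Victor's uniformly random challenge $x\in\mathbb{Z}_2^\ell$ (independent of $s,a,b$), correct response $x\boxplus h$ with $(x\boxplus h)_i=h^{(x_i)}_i$. $\mathcal{E}$: the event/run in which Peggy (knowing $s$) sends her response before receiving the challenge. $\mathcal{V}$: Victor observes a satisfactory run (sends $x$ and receives the correct response in time). $G(\Xi\vdash\Theta)$ is the guessing chance (maximal probability over randomized guessing procedures of producing $\Theta$ from $\Xi$). Sequences are indistinguishable if they differ by a negligible function $\nu$ (for every polynomial $q$ with non-negative integer coefficients, $\nu(\ell)<1/q(\ell)$ for large $\ell$). *)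

theory Defs
  imports "HOL-Probability.Probability" "HOL-Computational_Algebra.Polynomial"
begin

text \<open>Bit strings in Z_2^l are modelled as bool lists of length l (True = 1).\<close>

definition bits :: "nat \<Rightarrow> bool list pmf" where
  "bits l = pmf_of_set {xs. length xs = l}"

text \<open>The token h = h0 :: h1, uniformly distributed (random oracle output).\<close>
definition token :: "nat \<Rightarrow> (bool list \<times> bool list) pmf" where
  "token l = pair_pmf (bits l) (bits l)"

definition boxplus :: "bool list \<Rightarrow> bool list \<times> bool list \<Rightarrow> bool list" where
  "boxplus x h = map (\<lambda>i. if x ! i then snd h ! i else fst h ! i) [0..<length x]"

text \<open>Guessing chance G(Xi |- Theta) of producing Theta from Xi, where (Xi,Theta) has joint
  distribution D: maximal success probability over randomized guessing procedures.\<close>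
definition guess_chance :: "('a \<times> 'b) pmf \<Rightarrow> real" where
  "guess_chance D = (SUP f :: 'a \<Rightarrow> 'b pmf.
      measure_pmf.prob (D \<bind> (\<lambda>(\<xi>, \<theta>). map_pmf (\<lambda>y. y = \<theta>) (f \<xi>))) {True})"

definition token_response :: "nat \<Rightarrow> ((bool list \<times> bool list) \<times> bool list) pmf" where
  "token_response l = token l \<bind> (\<lambda>h. bits l \<bind> (\<lambda>x. return_pmf (h, boxplus x h)))"

definition q_seq :: "nat \<Rightarrow> real" where
  "q_seq l = guess_chance (token_response l)"

text \<open>Prob(V | E) for an early-reply strategy S of Peggy: S maps the token h (which Peggy can
  compute from s) to a random response sent before the challenge x is received.\<close>
definition early_success :: "nat \<Rightarrow> (bool list \<times> bool list \<Rightarrow> bool list pmf) \<Rightarrow> real" where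
  "early_success l S = measure_pmf.prob
     (token l \<bind> (\<lambda>h. S h \<bind> (\<lambda>r. bits l \<bind> (\<lambda>x. return_pmf (r = boxplus x h))))) {True}"

definition negligible :: "(nat \<Rightarrow> real) \<Rightarrow> bool" where
  "negligible \<nu> \<longleftrightarrow> (\<forall>q :: nat poly. q \<noteq> 0 \<longrightarrow>
      (\<forall>\<^sub>F l in sequentially. \<nu> l < 1 / real (poly q l)))"

definition indistinguishable :: "(nat \<Rightarrow> real) \<Rightarrow> (nat \<Rightarrow> real) \<Rightarrow> bool" where
  "indistinguishable a b \<longleftrightarrow> negligible (\<lambda>l. \<bar>a l - b l\<bar>)"

end

theory Submission imports Defs "HOL-Real_Asymp.Real_Asymp" begin

abbreviation SL :: "nat \<Rightarrow> bool list set" where "SL n \<equiv> {x. length x = n}"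

lemma SL_finite: "finite (SL n)"
  using finite_lists_length_eq[of "UNIV::bool set" n] by simp

lemma SL_ne: "SL n \<noteq> {}"
  by (auto intro: exI[of _ "replicate n False"])

lemma SL_card: "card (SL n) = 2 ^ n"
  using card_lists_length_eq[of "UNIV::bool set" n] by (simp add: card_UNIV_bool)

lemma sum_SL_Suc:
  "(\<Sum>x\<in>SL (Suc n). g x) = (\<Sum>xs\<in>SL n. g (True # xs) + g (False # xs))"
proof -
  have e: "SL (Suc n) = (\<lambda>(xs, b). b # xs) ` (SL n \<times> UNIV)"
    using lists_length_Suc_eq[of "UNIV::bool set" n] by simp
  have inj: "inj_on (\<lambda>(xs, b). b # xs) (SL n \<times> (UNIV::bool set))"
    by (auto simp: inj_on_def)
  have "(\<Sum>x\<in>SL (Suc n). g x) = (\<Sum>p\<in>SL n \<times> UNIV. g ((\<lambda>(xs, b). b # xs) p))"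
    unfolding e by (subst sum.reindex[OF inj]) (simp add: o_def)
  also have "\<dots> = (\<Sum>xs\<in>SL n. \<Sum>b\<in>UNIV. g (b # xs))"
    by (simp add: sum.cartesian_product case_prod_beta)
  also have "\<dots> = (\<Sum>xs\<in>SL n. g (True # xs) + g (False # xs))"
    by (simp add: UNIV_bool add.commute)
  finally show ?thesis .
qed

definition bp :: "bool list \<Rightarrow> bool list \<Rightarrow> bool list \<Rightarrow> bool list" where
  "bp x h0 h1 = map (\<lambda>(b, a, c). if b then c else a) (zip x (zip h0 h1))"

lemma bp_Cons: "bp (b # x) (a # h0) (c # h1) = (if b then c else a) # bp x h0 h1"
  by (simp add: bp_def)

lemma boxplus_bp: "length x = length h0 \<Longrightarrow> length h1 = length h0 \<Longrightarrow> boxplus x (h0, h1) = bp x h0 h1"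
  by (rule nth_equalityI) (auto simp: boxplus_def bp_def)

fun w :: "bool list \<Rightarrow> bool list \<Rightarrow> real" where
  "w (a # as) (c # cs) = (if a = c then 2 else 1) * w as cs"
| "w _ _ = 1"

lemma w_pos: "w h0 h1 \<ge> 0"
  by (induction h0 h1 rule: w.induct) auto

definition cnt :: "nat \<Rightarrow> bool list \<Rightarrow> bool list \<Rightarrow> bool list \<Rightarrow> real" where
  "cnt n h0 h1 r = (\<Sum>x\<in>SL n. if bp x h0 h1 = r then 1 else 0)"


lemma cnt_le: "length h0 = n \<Longrightarrow> length h1 = n \<Longrightarrow> cnt n h0 h1 r \<le> w h0 h1"
proof (induction n arbitrary: h0 h1 r)
  case 0 then show ?case by (simp add: cnt_def)
next
  case (Suc n)
  then obtain a as c cs where h: "h0 = a # as" "h1 = c # cs" "length as = n" "length cs = n"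
    by (auto simp: length_Suc_conv)
  show ?case
  proof (cases r)
    case Nil
    then show ?thesis using w_pos[of h0 h1] by (simp add: cnt_def sum_SL_Suc h bp_Cons)
  next
    case (Cons d rs)
    have "cnt (Suc n) h0 h1 r = ((if c = d then 1 else 0) + (if a = d then 1 else 0)) * cnt n as cs rs"
      by (simp add: cnt_def sum_SL_Suc h bp_Cons Cons sum_distrib_left sum.distrib[symmetric])
    also have "\<dots> \<le> (if a = c then 2 else 1) * w as cs"
      using Suc.IH[OF h(3,4), of rs] w_pos[of as cs]
      by (intro mult_mono) (auto simp: cnt_def intro: sum_nonneg)
    finally show ?thesis by (simp add: h)
  qed
qed

lemma cnt_eq: "length h0 = n \<Longrightarrow> length h1 = n \<Longrightarrow> cnt n h0 h1 h0 = w h0 h1"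
proof (induction n arbitrary: h0 h1)
  case 0 then show ?case by (simp add: cnt_def bp_def)
next
  case (Suc n)
  then obtain a as c cs where h: "h0 = a # as" "h1 = c # cs" "length as = n" "length cs = n"
    by (auto simp: length_Suc_conv)
  have "cnt (Suc n) h0 h1 h0 = ((if c = a then 1 else 0) + 1) * cnt n as cs as"
    by (simp add: cnt_def sum_SL_Suc h bp_Cons sum_distrib_left sum.distrib[symmetric])
  then show ?case using Suc.IH[OF h(3,4)] by (simp add: h)
qed

lemma sum_w: "(\<Sum>h0\<in>SL n. \<Sum>h1\<in>SL n. w h0 h1) = 6 ^ n"
proof (induction n)
  case 0 then show ?case by simp
next
  case (Suc n)
  have "(\<Sum>h0\<in>SL (Suc n). \<Sum>h1\<in>SL (Suc n). w h0 h1) = 6 * (\<Sum>h0\<in>SL n. \<Sum>h1\<in>SL n. w h0 h1)"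
    by (simp add: sum_SL_Suc sum.distrib sum_distrib_left algebra_simps flip: sum.distrib)
  then show ?case using Suc by simp
qed


lemma pmf_inner:
  assumes "length a = l" "length b = l"
  shows "pmf (bits l \<bind> (\<lambda>x. return_pmf (r = boxplus x (a, b)))) True = cnt l a b r / 2 ^ l"
proof -
  have "pmf (bits l \<bind> (\<lambda>x. return_pmf (r = boxplus x (a, b)))) True
      = (\<Sum>x\<in>SL l. indicator {True} (r = boxplus x (a, b))) / 2 ^ l"
    by (simp add: pmf_bind bits_def integral_pmf_of_set[OF SL_ne SL_finite] SL_card)
  also have "\<dots> = cnt l a b r / 2 ^ l"
    unfolding cnt_def using assms
    by (intro arg_cong[where f="\<lambda>t. t / 2 ^ l"] sum.cong) (auto simp: boxplus_bp)
  finally show ?thesis .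
qed

lemma pmf_token_bind:
  "pmf (token l \<bind> g) t = (\<Sum>a\<in>SL l. \<Sum>b\<in>SL l. pmf (g (a, b)) t) / 4 ^ l"
proof -
  have "token l \<bind> g = bits l \<bind> (\<lambda>a. bits l \<bind> (\<lambda>b. g (a, b)))"
    by (simp add: token_def pair_pmf_def bind_assoc_pmf bind_return_pmf)
  then show ?thesis
    by (simp add: pmf_bind bits_def integral_pmf_of_set[OF SL_ne SL_finite] SL_card
        sum_divide_distrib[symmetric] power_mult_distrib[symmetric])
qed

definition Q :: "nat \<Rightarrow> (bool list \<times> bool list \<Rightarrow> bool list pmf) \<Rightarrow> real" where
  "Q l f = pmf (token l \<bind> (\<lambda>h. f h \<bind> (\<lambda>r. bits l \<bind> (\<lambda>x. return_pmf (r = boxplus x h))))) True"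

lemma Q_le: "Q l f \<le> (3/4) ^ l"
proof -
  have le: "pmf (f (a, b) \<bind> (\<lambda>r. bits l \<bind> (\<lambda>x. return_pmf (r = boxplus x (a, b))))) True \<le> w a b / 2 ^ l"
    if "a \<in> SL l" "b \<in> SL l" for a b
  proof -
    have "pmf (f (a, b) \<bind> (\<lambda>r. bits l \<bind> (\<lambda>x. return_pmf (r = boxplus x (a, b))))) True
        = (\<integral>r. pmf (bits l \<bind> (\<lambda>x. return_pmf (r = boxplus x (a, b)))) True \<partial>measure_pmf (f (a, b)))"
      by (rule pmf_bind)
    also have "\<dots> = (\<integral>r. cnt l a b r / 2 ^ l \<partial>measure_pmf (f (a, b)))"
      using that by (intro Bochner_Integration.integral_cong refl) (simp add: pmf_inner)
    also have "\<dots> \<le> (\<integral>r. w a b / 2 ^ l \<partial>measure_pmf (f (a, b)))"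
    proof (rule integral_mono)
      show "integrable (measure_pmf (f (a, b))) (\<lambda>r. cnt l a b r / 2 ^ l)"
      proof (intro measure_pmf.integrable_const_bound[where B="w a b / 2 ^ l"] AE_pmfI)
        fix r
        have "0 \<le> cnt l a b r" by (simp add: cnt_def sum_nonneg)
        then show "norm (cnt l a b r / 2 ^ l) \<le> w a b / 2 ^ l"
          using cnt_le[of a l b r] that by (simp add: divide_right_mono)
      qed simp
    qed (use that cnt_le in \<open>auto intro!: divide_right_mono\<close>)
    also have "\<dots> = w a b / 2 ^ l" by simp
    finally show ?thesis .
  qed
  have "Q l f \<le> (\<Sum>a\<in>SL l. \<Sum>b\<in>SL l. w a b / 2 ^ l) / 4 ^ l"
    unfolding Q_def pmf_token_bind
    by (intro divide_right_mono sum_mono le) auto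
  also have "\<dots> = (3/4) ^ l"
    by (simp add: sum_divide_distrib[symmetric] sum_w power_divide[symmetric] flip: power_mult_distrib)
  finally show ?thesis .
qed

lemma Q_eq: "Q l (\<lambda>h. return_pmf (fst h)) = (3/4) ^ l"
proof -
  have "Q l (\<lambda>h. return_pmf (fst h)) = (\<Sum>a\<in>SL l. \<Sum>b\<in>SL l. w a b / 2 ^ l) / 4 ^ l"
    unfolding Q_def pmf_token_bind
    by (intro arg_cong[where f="\<lambda>t. t / 4 ^ l"] sum.cong) (auto simp: bind_return_pmf pmf_inner cnt_eq)
  also have "\<dots> = (3/4) ^ l"
    by (simp add: sum_divide_distrib[symmetric] sum_w power_divide[symmetric] flip: power_mult_distrib)
  finally show ?thesis .
qed

lemma Q_nonneg: "0 \<le> Q l f"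
  by (simp add: Q_def)

lemma guess_Q:
  "measure_pmf.prob (token_response l \<bind> (\<lambda>(\<xi>, \<theta>). map_pmf (\<lambda>y. y = \<theta>) (f \<xi>))) {True} = Q l f"
proof -
  have "token_response l \<bind> (\<lambda>(\<xi>, \<theta>). map_pmf (\<lambda>y. y = \<theta>) (f \<xi>))
     = token l \<bind> (\<lambda>h. bits l \<bind> (\<lambda>x. f h \<bind> (\<lambda>y. return_pmf (y = boxplus x h))))"
    by (simp add: token_response_def bind_assoc_pmf bind_return_pmf map_pmf_def)
  also have "\<dots> = token l \<bind> (\<lambda>h. f h \<bind> (\<lambda>y. bits l \<bind> (\<lambda>x. return_pmf (y = boxplus x h))))"
    by (subst bind_commute_pmf) (rule refl)
  finally show ?thesis by (simp add: Q_def measure_pmf_single)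
qed

lemma q_seq_eq: "q_seq l = (3/4) ^ l"
proof -
  have eq: "q_seq l = (SUP f. Q l f)"
    by (simp add: q_seq_def guess_chance_def guess_Q)
  have bdd: "bdd_above (range (Q l))"
    by (intro bdd_aboveI2) (rule Q_le)
  show ?thesis unfolding eq
  proof (rule antisym)
    show "(SUP f. Q l f) \<le> (3/4) ^ l" by (rule cSUP_least) (auto intro: Q_le)
    show "(3/4) ^ l \<le> (SUP f. Q l f)"
      using cSUP_upper[OF _ bdd, of "\<lambda>h. return_pmf (fst h)"] Q_eq by simp
  qed
qed

lemma early_Q: "early_success l S = Q l S"
  by (simp add: early_success_def Q_def measure_pmf_single)

lemma negl_geom:
  assumes "\<And>l. 0 \<le> \<nu> l" "\<And>l. \<nu> l \<le> (3/4) ^ l"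
  shows "negligible \<nu>"
  unfolding negligible_def
proof (intro allI impI)
  fix q :: "nat poly" assume q: "q \<noteq> 0"
  have lim: "(\<lambda>l. real (poly q l) * (3/4::real) ^ l) \<longlonglongrightarrow> 0"
  proof -
    have "(\<lambda>l. (\<Sum>i\<le>degree q. real (coeff q i) * (real l ^ i * (3/4::real) ^ l))) \<longlonglongrightarrow> (\<Sum>i\<le>degree q. real (coeff q i) * 0)"
    proof (intro tendsto_sum tendsto_mult tendsto_const)
      fix i show "(\<lambda>l. real l ^ i * (3/4::real) ^ l) \<longlonglongrightarrow> 0" by real_asymp
    qed
    then show ?thesis
      by (simp add: poly_altdef sum_distrib_right mult.assoc)
  qed
  obtain i where ci: "coeff q i \<noteq> 0" using q by (metis leading_coeff_0_iff)
  have pos: "poly q l > 0" if "l \<ge> 1" for l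
  proof -
    have "i \<le> degree q" using ci le_degree by blast
    then have "coeff q i * l ^ i \<le> poly q l"
      unfolding poly_altdef by (intro member_le_sum) auto
    moreover have "coeff q i * l ^ i > 0" using ci that by simp
    ultimately show ?thesis by linarith
  qed
  have ev: "\<forall>\<^sub>F l in sequentially. real (poly q l) * (3/4::real) ^ l < 1"
    using lim by (rule order_tendstoD) simp
  show "\<forall>\<^sub>F l in sequentially. \<nu> l < 1 / real (poly q l)"
    using ev eventually_ge_at_top[of 1]
  proof eventually_elim
    case (elim l)
    then have p: "real (poly q l) > 0" using pos by simp
    have "\<nu> l * real (poly q l) \<le> (3/4) ^ l * real (poly q l)"
      using assms(2)[of l] p by (intro mult_right_mono) auto
    also have "\<dots> < 1" using elim by (simp add: mult.commute)
    finally show ?case using p by (simp add: field_simps)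
  qed
qed

theorem proposition6p7:
  fixes P :: "nat \<Rightarrow> bool list \<times> bool list \<Rightarrow> bool list pmf"
  shows "indistinguishable (\<lambda>l. early_success l (P l)) q_seq
       \<and> (\<forall>l. q_seq l = (3/4) ^ l)
       \<and> negligible (\<lambda>l. early_success l (P l))"
proof (intro conjI allI)
  show "indistinguishable (\<lambda>l. early_success l (P l)) q_seq"
    unfolding indistinguishable_def
    by (rule negl_geom) (use Q_le Q_nonneg in \<open>auto simp: early_Q q_seq_eq abs_le_iff\<close>)
  show "q_seq l = (3/4) ^ l" for l by (rule q_seq_eq)
  show "negligible (\<lambda>l. early_success l (P l))"
    by (rule negl_geom) (auto simp: early_Q Q_le Q_nonneg)
qed

end
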